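(* Let $\alpha\in\mathcal{E}$, $R\in\mathbb{N}$, and natural numbers $x_0<\dots<x_R$ and $y_0<\dots<y_R$ with $\mathrm{MC}(\alpha)<y_0$ and $0<x_i\leq y_i$ for all $i\leq R$. If $\alpha[x_0][x_1]\cdots[x_R]>0$, then $\alpha[y_0][y_1]\cdots[y_R]>0$.
   Context: $\mathcal{E}$ is the set of ordinal notations below $\varepsilon_0$: formal sums $\omega^{\alpha_0}+\dots+\omega^{\alpha_n}$ with $\alpha_0\geq\dots\geq\alpha_n\in\mathcal{E}$ (the empty sum is $0$). The order is lexicographic: $\omega^{\alpha_0}+\dots+\omega^{\alpha_n}<\omega^{\beta_0}+\dots+\omega^{\beta_m}$ iff either $n<m$ and $\alpha_i=\beta_i$ for all $i\leq n$, or there is $i\leq\min\{n,m\}$ with $\alpha_j=\beta_j$ for $j<i$ and $\alpha_i<\beta_i$. Also $0<\alpha$ for $\alpha\neq0$. Write $1=\omega^0$. A nonzero ordinal is a successor if its last exponent $\alpha_n$ is $0$ and a limit otherwise. Every $\alpha$ has a Cantor normal form $\omega^{\alpha_0}a_0+\dots+\omega^{\alpha_n}a_n$ with $\alpha_0>\dots>\alpha_n$ and positive integers $a_i$. The maximal coefficient is $\mathrm{MC}(0)=0$ and $\mathrm{MC}(\alpha)=\max_i\{a_i,\mathrm{MC}(\alpha_i)\}$. Fundamental sequences, for $\alpha=\omega^{\alpha_0}+\dots+\omega^{\alpha_n}$ and $x\in\mathbb{N}$: $0[x]=0$. If $\alpha_n=0$ then $\alpha[x]=\omega^{\alpha_0}+\dots+\omega^{\alpha_{n-1}}$.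 If $\alpha_n=\beta+1$ then $\alpha[x]=\omega^{\alpha_0}+\dots+\omega^{\alpha_{n-1}}+\omega^\beta\cdot x$ ($x$ copies of $\omega^\beta$). If $\alpha_n$ is a limit then $\alpha[x]=\omega^{\alpha_0}+\dots+\omega^{\alpha_{n-1}}+\omega^{\alpha_n[x]}$. $\alpha[x_0][x_1]\cdots[x_R]$ denotes iterated application. *)

theory Defs
  imports Main
begin

text \<open>Ordinal notations below epsilon_0: Om [a0,...,an] denotes
  omega^a0 + ... + omega^an.  Om [] is 0.\<close>
datatype ON = Om "ON list"

definition zero :: ON where "zero = Om []"

fun on_less :: "ON \<Rightarrow> ON \<Rightarrow> bool"
and list_less :: "ON list \<Rightarrow> ON list \<Rightarrow> bool" where
  "on_less (Om as) (Om bs) = list_less as bs"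
| "list_less [] [] = False"
| "list_less [] (b # bs) = True"
| "list_less (a # as) [] = False"
| "list_less (a # as) (b # bs) = (on_less a b \<or> (a = b \<and> list_less as bs))"

fun in_E :: "ON \<Rightarrow> bool"
and in_E_list :: "ON list \<Rightarrow> bool" where
  "in_E (Om as) = (sorted_wrt (\<lambda>a b. on_less b a \<or> a = b) as \<and> in_E_list as)"
| "in_E_list [] = True"
| "in_E_list (a # as) = (in_E a \<and> in_E_list as)"

text \<open>Maximal coefficient: the Cantor normal form coefficient of omega^a in
  Om as is the number of copies of a in as.\<close>
fun MC :: "ON \<Rightarrow> nat" where
  "MC (Om as) = Max (insert 0 (set (map (\<lambda>a. max (count_list as a) (MC a)) as)))"

fun fs_list :: "ON list \<Rightarrow> nat \<Rightarrow> ON list" where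
  "fs_list [] x = []"
| "fs_list [Om []] x = []"
| "fs_list [Om (b # bs)] x =
     (if last (b # bs) = Om [] then replicate x (Om (butlast (b # bs)))
      else [Om (fs_list (b # bs) x)])"
| "fs_list (a # b # rest) x = a # fs_list (b # rest) x"

fun fs :: "ON \<Rightarrow> nat \<Rightarrow> ON" where
  "fs (Om as) x = Om (fs_list as x)"

definition fs_iter :: "ON \<Rightarrow> nat list \<Rightarrow> ON" where
  "fs_iter a xs = foldl fs a xs"

end

theory Submission
  imports Defs
begin

definition on_le :: "ON \<Rightarrow> ON \<Rightarrow> bool" where
  "on_le a b = (on_less a b \<or> a = b)"

lemma list_less_irr: "(\<And>a. a \<in> set as \<Longrightarrow> \<not> on_less a a) \<Longrightarrow> \<not> list_less as as"
  by (induction as) auto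

lemma list_less_Nil2[simp]: "\<not> list_less as []"
  by (cases as) auto

lemma on_less_irr: "\<not> on_less a a"
proof (induction a)
  case (Om as)
  then show ?case using list_less_irr[of as] by simp
qed

lemma list_less_trans:
  "(\<And>a b c. a \<in> set as \<Longrightarrow> on_less a b \<Longrightarrow> on_less b c \<Longrightarrow> on_less a c)
   \<Longrightarrow> list_less as bs \<Longrightarrow> list_less bs cs \<Longrightarrow> list_less as cs"
proof (induction as arbitrary: bs cs)
  case Nil
  then show ?case by (cases cs) (cases bs, auto)+
next
  case (Cons a as)
  show ?case
  proof (cases bs)
    case Nil
    then show ?thesis using Cons by simp
  next
    case bs: (Cons b bs')
    show ?thesis
    proof (cases cs)
      case Nil
      then show ?thesis using Cons bs by simp
    next
      case cs: (Cons c cs')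
      have ha: "\<And>b c. on_less a b \<Longrightarrow> on_less b c \<Longrightarrow> on_less a c" using Cons.prems(1) by simp
      have IH: "\<And>bs cs. list_less as bs \<Longrightarrow> list_less bs cs \<Longrightarrow> list_less as cs"
        by (rule Cons.IH) (use Cons.prems(1) in auto)
      have 1: "on_less a b \<or> (a = b \<and> list_less as bs')" using Cons.prems(2) bs by simp
      have 2: "on_less b c \<or> (b = c \<and> list_less bs' cs')" using Cons.prems(3) bs cs by simp
      from 1 have "on_less a c \<or> (a = c \<and> list_less as cs')"
      proof
        assume "on_less a b"
        then show ?thesis using 2 ha by blast
      next
        assume a: "a = b \<and> list_less as bs'"
        then show ?thesis using 2 IH by blast
      qed
      then show ?thesis using cs by simp
    qed
  qed
qed

lemma on_less_trans: "on_less a b \<Longrightarrow> on_less b c \<Longrightarrow> on_less a c"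
proof (induction a arbitrary: b c)
  case (Om as)
  obtain bs where b: "b = Om bs" by (cases b)
  obtain cs where c: "c = Om cs" by (cases c)
  have "list_less as cs"
    by (rule list_less_trans[of as bs cs]) (use Om b c in auto)
  then show ?case using c by simp
qed

lemma list_less_snoc:
  "list_less bs (p @ [g]) \<Longrightarrow> list_less bs p \<or> bs = p \<or> (\<exists>c rest. bs = p @ c # rest \<and> on_less c g)"
proof (induction p arbitrary: bs)
  case Nil
  then show ?case by (cases bs) auto
next
  case (Cons a p)
  then show ?case by (cases bs) auto
qed

lemma list_less_append_same: "list_less (p @ s) (p @ t) = list_less s t"
  by (induction p) (auto simp: on_less_irr)

lemma list_less_prefix: "list_less p (p @ t) = (t \<noteq> [])"
  using list_less_append_same[of p "[]" t] by (cases t) auto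

lemma list_less_append_right: "list_less bs p \<Longrightarrow> list_less bs (p @ t)"
proof (induction bs arbitrary: p)
  case Nil
  then show ?case by (cases p) auto
next
  case (Cons b bs)
  then show ?case by (cases p) auto
qed

fun fsl :: "ON \<Rightarrow> nat \<Rightarrow> ON list" where
  "fsl (Om []) n = []"
| "fsl (Om (b # bs)) n = (if last (b # bs) = Om [] then replicate n (Om (butlast (b # bs)))
      else [Om (fs_list (b # bs) n)])"

lemma fs_list_snoc: "fs_list (p @ [g]) n = p @ fsl g n"
proof (induction p)
  case Nil
  then show ?case
  proof (cases g)
    case (Om ds)
    then show ?thesis by (cases ds) auto
  qed
next
  case (Cons a p)
  obtain b rest where "p @ [g] = b # rest" by (cases "p @ [g]") auto
  then show ?case using Cons by (simp del: fs_list.simps) (simp)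
qed

lemma in_E_list_iff: "in_E_list as = (\<forall>a\<in>set as. in_E a)"
  by (induction as) auto

lemma fs_Om: "gs \<noteq> [] \<Longrightarrow> fs (Om gs) n = Om (butlast gs @ fsl (last gs) n)"
  using fs_list_snoc[of "butlast gs" "last gs" n] by simp

lemma butlast_less: "ds \<noteq> [] \<Longrightarrow> on_less (Om (butlast ds)) (Om ds)"
  using list_less_prefix[of "butlast ds" "[last ds]"] by simp

lemma fsl_less_single:
  assumes IH: "\<And>ds. g = Om ds \<Longrightarrow> ds \<noteq> [] \<Longrightarrow> on_less (fs g n) g"
  shows "list_less (fsl g n) [g]"
proof (cases g)
  case (Om ds)
  show ?thesis
  proof (cases ds)
    case Nil
    then show ?thesis using Om by simp
  next
    case (Cons b bs)
    show ?thesis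
    proof (cases "last ds = Om []")
      case True
      then show ?thesis using Om Cons butlast_less[of ds] by (cases n) auto
    next
      case False
      then show ?thesis using Om Cons IH[of ds] by simp
    qed
  qed
qed

lemma fs_less: "a \<noteq> zero \<Longrightarrow> on_less (fs a n) a"
proof (induction a)
  case (Om gs)
  then have ne: "gs \<noteq> []" by (simp add: zero_def)
  have "last gs \<in> set gs" using ne by simp
  then have "list_less (fsl (last gs) n) [last gs]"
  proof (intro fsl_less_single)
    fix ds assume "last gs = Om ds" "ds \<noteq> []"
    then show "on_less (fs (last gs) n) (last gs)"
      using Om.IH[OF \<open>last gs \<in> set gs\<close>] by (simp add: zero_def)
  qed
  then have "list_less (butlast gs @ fsl (last gs) n) (butlast gs @ [last gs])"
    by (simp only: list_less_append_same)
  then show ?case using ne fs_Om[of gs n] by simp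
qed

lemma fs_zero: "fs zero n = zero"
  by (simp add: zero_def)

lemma fsl_less: "c \<in> set (fsl g n) \<Longrightarrow> on_less c g"
proof (cases g)
  case (Om ds)
  assume c: "c \<in> set (fsl g n)"
  show ?thesis
  proof (cases ds)
    case Nil
    then show ?thesis using Om c by simp
  next
    case (Cons b bs)
    show ?thesis
    proof (cases "last ds = Om []")
      case True
      then show ?thesis using Om Cons c butlast_less[of ds] by (cases n) auto
    next
      case False
      then have "c = fs g n" using Om Cons c by simp
      moreover have "g \<noteq> zero" using Om Cons by (simp add: zero_def)
      ultimately show ?thesis using fs_less by simp
    qed
  qed
qed

lemma fs_mono: "x \<le> y \<Longrightarrow> on_le (fs a x) (fs a y)"
proof (induction a)
  case (Om gs)
  show ?case
  proof (cases "gs = []")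
    case True
    then show ?thesis by (simp add: on_le_def)
  next
    case ne: False
    define g where "g = last gs"
    have gin: "g \<in> set gs" using ne g_def by simp
    have "list_less (fsl g x) (fsl g y) \<or> fsl g x = fsl g y"
    proof (cases g)
      case (Om ds)
      show ?thesis
      proof (cases ds)
        case Nil
        then show ?thesis using Om by simp
      next
        case (Cons b bs)
        show ?thesis
        proof (cases "last ds = Om []")
          case True
          have "replicate y (Om (butlast ds)) = replicate x (Om (butlast ds)) @ replicate (y - x) (Om (butlast ds))"
            using \<open>x \<le> y\<close> by (metis le_add_diff_inverse replicate_add)
          then have "list_less (replicate x (Om (butlast ds))) (replicate y (Om (butlast ds)))
             \<or> replicate x (Om (butlast ds)) = replicate y (Om (butlast ds))"
            using list_less_prefix by (metis append.right_neutral)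
          then show ?thesis using True Om Cons by simp
        next
          case False
          have "on_le (fs g x) (fs g y)" using Om.IH[OF gin] Om.prems by simp
          then show ?thesis using False Om Cons by (auto simp: on_le_def)
        qed
      qed
    qed
    then have "list_less (butlast gs @ fsl g x) (butlast gs @ fsl g y) \<or> butlast gs @ fsl g x = butlast gs @ fsl g y"
      by (simp only: list_less_append_same) simp
    then show ?thesis using ne fs_Om g_def by (simp add: on_le_def)
  qed
qed

lemma in_E_Om: "in_E (Om as) = (sorted_wrt (\<lambda>a b. on_less b a \<or> a = b) as \<and> (\<forall>a\<in>set as. in_E a))"
  by (simp add: in_E_list_iff)

lemma sorted_rep: "sorted_wrt (\<lambda>a b. on_less b a \<or> a = b) (replicate n d)"
  by (induction n) auto

lemma in_E_butlast: "in_E (Om ds) \<Longrightarrow> in_E (Om (butlast ds))"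
proof -
  assume a: "in_E (Om ds)"
  show ?thesis
  proof (cases "ds = []")
    case True then show ?thesis using a by simp
  next
    case False
    then have e: "ds = butlast ds @ [last ds]" by simp
    have "sorted_wrt (\<lambda>a b. on_less b a \<or> a = b) (butlast ds @ [last ds])"
      using a e by (simp add: in_E_Om)
    then have "sorted_wrt (\<lambda>a b. on_less b a \<or> a = b) (butlast ds)"
      by (simp add: sorted_wrt_append)
    moreover have "\<forall>c\<in>set (butlast ds). in_E c" using a by (auto simp: in_E_list_iff dest: in_set_butlastD)
    ultimately show ?thesis by (simp add: in_E_list_iff)
  qed
qed

lemma fsl_in_E:
  assumes "in_E g" and IH: "in_E g \<Longrightarrow> in_E (fs g n)"
  shows "sorted_wrt (\<lambda>a b. on_less b a \<or> a = b) (fsl g n) \<and> (\<forall>c\<in>set (fsl g n). in_E c)"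
proof (cases g)
  case (Om ds)
  show ?thesis
  proof (cases ds)
    case Nil
    then show ?thesis using Om by simp
  next
    case (Cons b bs)
    show ?thesis
    proof (cases "last ds = Om []")
      case True
      have "in_E (Om (butlast ds))" using in_E_butlast assms Om by simp
      then show ?thesis using True Om Cons sorted_rep by simp
    next
      case False
      then show ?thesis using Om Cons IH assms by simp
    qed
  qed
qed

lemma in_E_fs: "in_E a \<Longrightarrow> in_E (fs a n)"
proof (induction a)
  case (Om gs)
  show ?case
  proof (cases "gs = []")
    case True
    then show ?thesis by simp
  next
    case ne: False
    define g where "g = last gs"
    define p where "p = butlast gs"
    have e: "gs = p @ [g]" using ne g_def p_def by simp
    have gin: "g \<in> set gs" using ne g_def by simp
    have ie: "in_E (Om (p @ [g]))" using Om.prems e by simp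
    have s: "sorted_wrt (\<lambda>a b. on_less b a \<or> a = b) (p @ [g])" using ie unfolding in_E_Om by blast
    have all: "\<forall>c\<in>set (p @ [g]). in_E c" using ie unfolding in_E_Om by blast
    have ig: "in_E g" using all by simp
    have f: "sorted_wrt (\<lambda>a b. on_less b a \<or> a = b) (fsl g n) \<and> (\<forall>c\<in>set (fsl g n). in_E c)"
      using fsl_in_E[OF ig] Om.IH[OF gin] by blast
    have pg: "\<forall>a\<in>set p. on_less g a \<or> a = g" using s by (simp add: sorted_wrt_append)
    have cross: "\<forall>a\<in>set p. \<forall>c\<in>set (fsl g n). on_less c a \<or> a = c"
    proof (intro ballI)
      fix a c assume a: "a \<in> set p" and c: "c \<in> set (fsl g n)"
      have cg: "on_less c g" using fsl_less[OF c] .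
      from pg a have "on_less g a \<or> a = g" by blast
      then show "on_less c a \<or> a = c"
      proof
        assume "on_less g a" then show ?thesis using cg on_less_trans by blast
      next
        assume "a = g" then show ?thesis using cg by simp
      qed
    qed
    have sp: "sorted_wrt (\<lambda>a b. on_less b a \<or> a = b) p" using s by (simp add: sorted_wrt_append)
    have "sorted_wrt (\<lambda>a b. on_less b a \<or> a = b) (p @ fsl g n)"
      unfolding sorted_wrt_append using sp f cross by blast
    moreover have "\<forall>c\<in>set (p @ fsl g n). in_E c" unfolding set_append using all f by auto
    ultimately have "in_E (Om (p @ fsl g n))" unfolding in_E_Om by (rule conjI)
    then show ?thesis using fs_Om[OF ne, of n] p_def g_def by simp
  qed
qed

lemma MC_le_iff: "(MC (Om as) \<le> N) = (\<forall>a\<in>set as. count_list as a \<le> N \<and> MC a \<le> N)"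
  by (auto simp: Max_le_iff)

lemma MC_butlast: "MC (Om ds) \<le> N \<Longrightarrow> MC (Om (butlast ds)) \<le> N"
proof (cases "ds = []")
  case True then show "MC (Om ds) \<le> N \<Longrightarrow> MC (Om (butlast ds)) \<le> N" by simp
next
  case False
  assume a: "MC (Om ds) \<le> N"
  have e: "ds = butlast ds @ [last ds]" using False by simp
  have "\<forall>c\<in>set (butlast ds). count_list (butlast ds) c \<le> count_list ds c"
    using e by (metis count_list_append le_add1)
  then show ?thesis using a unfolding MC_le_iff
    by (meson in_set_butlastD le_trans)
qed

lemma MC_fs: "in_E a \<Longrightarrow> MC a \<le> N \<Longrightarrow> n \<le> N \<Longrightarrow> MC (fs a n) \<le> N"
proof (induction a)
  case (Om gs)
  show ?case
  proof (cases "gs = []")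
    case True
    then show ?thesis by simp
  next
    case ne: False
    define g where "g = last gs"
    define p where "p = butlast gs"
    have e: "gs = p @ [g]" using ne g_def p_def by simp
    have gin: "g \<in> set gs" using ne g_def by simp
    have ie: "in_E (Om (p @ [g]))" using Om.prems e by simp
    have s: "sorted_wrt (\<lambda>a b. on_less b a \<or> a = b) (p @ [g])" using ie unfolding in_E_Om by blast
    have all: "\<forall>c\<in>set (p @ [g]). in_E c" using ie unfolding in_E_Om by blast
    have M: "\<forall>c\<in>set (p @ [g]). count_list (p @ [g]) c \<le> N \<and> MC c \<le> N"
      using Om.prems(2) e MC_le_iff by metis
    have pg: "\<forall>a\<in>set p. on_less g a \<or> a = g" using s by (simp add: sorted_wrt_append)
    have notp: "\<forall>c\<in>set (fsl g n). c \<notin> set p"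
    proof (intro ballI notI)
      fix c assume c: "c \<in> set (fsl g n)" and cp: "c \<in> set p"
      have cg: "on_less c g" using fsl_less[OF c] .
      from pg cp have "on_less g c \<or> c = g" by blast
      then show False
      proof
        assume "on_less g c" then show False using cg on_less_trans on_less_irr by blast
      next
        assume "c = g" then show False using cg on_less_irr by simp
      qed
    qed
    have ft: "\<forall>c\<in>set (fsl g n). count_list (fsl g n) c \<le> N \<and> MC c \<le> N"
    proof (cases g)
      case (Om ds)
      show ?thesis
      proof (cases ds)
        case Nil
        then show ?thesis using Om by simp
      next
        case (Cons b bs)
        show ?thesis
        proof (cases "last ds = Om []")
          case True
          have "MC g \<le> N" using M by simp
          then have "MC (Om (butlast ds)) \<le> N" using MC_butlast Om by simp
          then show ?thesis using True Om Cons \<open>n \<le> N\<close> by (simp add: count_list_eq_length_filter)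
        next
          case False
          have "1 \<le> count_list (p @ [g]) g" by simp
          then have "1 \<le> N" using M by (meson in_set_conv_decomp le_trans)
          moreover have "MC (fs g n) \<le> N"
            using Om.IH[OF gin] all M Om.prems by simp
          ultimately show ?thesis using False \<open>g = Om ds\<close> Cons by simp
        qed
      qed
    qed
    have "\<forall>c\<in>set (p @ fsl g n). count_list (p @ fsl g n) c \<le> N \<and> MC c \<le> N"
    proof
      fix c assume c: "c \<in> set (p @ fsl g n)"
      show "count_list (p @ fsl g n) c \<le> N \<and> MC c \<le> N"
      proof (cases "c \<in> set p")
        case True
        then have "c \<notin> set (fsl g n)" using notp by blast
        then show ?thesis using True M by force
      next
        case False
        then have "c \<in> set (fsl g n)" using c by simp
        then show ?thesis using False ft by simp
      qed
    qed
    then have "MC (Om (p @ fsl g n)) \<le> N" by (simp only: MC_le_iff)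
    then show ?thesis using fs_Om[OF ne, of n] p_def g_def by simp
  qed
qed

lemma rep_less:
  "sorted_wrt (\<lambda>a b. on_less b a \<or> a = b) (d # rest) \<Longrightarrow> count_list (d # rest) d < n
   \<Longrightarrow> list_less (d # rest) (replicate n d)"
proof (induction rest arbitrary: n)
  case Nil
  then obtain m where "n = Suc (Suc m)" by (cases n; cases "n - 1") auto
  then show ?case by (simp add: on_less_irr)
next
  case (Cons c rest)
  have cd: "on_less c d \<or> d = c" using Cons.prems(1) by simp
  have "count_list (d # c # rest) d \<ge> 1" by simp
  then obtain m where n: "n = Suc (Suc m)" using Cons.prems(2) by (cases n; cases "n - 1") auto
  show ?case
  proof (cases "d = c")
    case False
    then have "on_less c d" using cd by simp
    then show ?thesis using n by (simp add: on_less_irr)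
  next
    case True
    have "sorted_wrt (\<lambda>a b. on_less b a \<or> a = b) (d # rest)"
      using Cons.prems(1) True by simp
    moreover have "count_list (d # rest) d < Suc m" using Cons.prems(2) True n by simp
    ultimately have "list_less (d # rest) (replicate (Suc m) d)" by (rule Cons.IH)
    then show ?thesis using True n by (simp add: on_less_irr)
  qed
qed

fun islim :: "ON \<Rightarrow> bool" where
  "islim (Om gs) = (gs \<noteq> [] \<and> last gs \<noteq> Om [])"

lemma less_succ: "on_less c (Om (ds @ [Om []])) \<Longrightarrow> on_less c (Om ds) \<or> c = Om ds"
proof -
  assume a: "on_less c (Om (ds @ [Om []]))"
  obtain cs where c: "c = Om cs" by (cases c)
  have "list_less cs (ds @ [Om []])" using a c by simp
  then have "list_less cs ds \<or> cs = ds \<or> (\<exists>e rest. cs = ds @ e # rest \<and> on_less e (Om []))"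
    by (rule list_less_snoc)
  moreover have "\<And>e. \<not> on_less e (Om [])" by (case_tac e) simp
  ultimately show ?thesis using c by auto
qed

lemma bach:
  "in_E b \<Longrightarrow> MC b < n \<Longrightarrow> on_less b \<gamma> \<Longrightarrow> on_le b (fs \<gamma> n) \<and> (islim \<gamma> \<longrightarrow> on_less b (fs \<gamma> n))"
proof (induction \<gamma> arbitrary: b)
  case (Om gs)
  obtain bs where b: "b = Om bs" by (cases b)
  have lt: "list_less bs gs" using Om.prems(3) b by simp
  then have ne: "gs \<noteq> []" by auto
  define g where "g = last gs"
  define p where "p = butlast gs"
  have gsE: "gs = p @ [g]" using ne g_def p_def by simp
  have gin: "g \<in> set gs" using ne g_def by simp
  have fsg: "fs (Om gs) n = Om (p @ fsl g n)" using fs_Om[OF ne, of n] p_def g_def by simp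
  have npos: "0 < n" using Om.prems(2) by simp
  have ieb: "in_E (Om bs)" using Om.prems(1) b by simp
  have sb: "sorted_wrt (\<lambda>a b. on_less b a \<or> a = b) bs" and allb: "\<forall>c\<in>set bs. in_E c"
    using ieb unfolding in_E_Om by blast+
  have Mb: "\<forall>c\<in>set bs. count_list bs c \<le> MC b \<and> MC c \<le> MC b"
    using b MC_le_iff[of bs "MC b"] by simp
  have limne: "islim (Om gs) \<Longrightarrow> fsl g n \<noteq> []"
  proof -
    assume "islim (Om gs)"
    then have gnz: "g \<noteq> Om []" using g_def by simp
    obtain ds where gd: "g = Om ds" by (cases g)
    then obtain d ds' where "ds = d # ds'" using gnz by (cases ds) auto
    then show ?thesis using gd npos by (cases n) auto
  qed
  have "list_less bs gs" by (rule lt)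
  then have "list_less bs (p @ [g])" using gsE by simp
  then have "list_less bs p \<or> bs = p \<or> (\<exists>c rest. bs = p @ c # rest \<and> on_less c g)"
    by (rule list_less_snoc)
  then have C: "list_less bs (p @ fsl g n) \<or> (bs = p \<and> fsl g n = [])"
  proof (elim disjE exE conjE)
    assume "list_less bs p"
    then show ?thesis using list_less_append_right by blast
  next
    assume "bs = p"
    then show ?thesis using list_less_prefix by blast
  next
    fix c rest assume bsE: "bs = p @ c # rest" and cg: "on_less c g"
    have cin: "c \<in> set bs" using bsE by simp
    have "list_less (c # rest) (fsl g n)"
    proof (cases g)
      case (Om ds)
      show ?thesis
      proof (cases ds)
        case Nil
        then show ?thesis using Om cg by (cases c) simp
      next
        case (Cons d ds')
        show ?thesis
        proof (cases "last ds = Om []")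
          case True
          have dsE: "ds = butlast ds @ [Om []]" using True Cons by (metis append_butlast_last_id list.discI)
          have "on_less c (Om (butlast ds)) \<or> c = Om (butlast ds)"
            using less_succ[of c "butlast ds"] cg Om dsE by simp
          then have "list_less (c # rest) (replicate n (Om (butlast ds)))"
          proof
            assume "on_less c (Om (butlast ds))"
            then show ?thesis using npos by (cases n) auto
          next
            assume cE: "c = Om (butlast ds)"
            have "sorted_wrt (\<lambda>a b. on_less b a \<or> a = b) (c # rest)"
              using sb bsE by (simp add: sorted_wrt_append)
            moreover have "count_list (c # rest) c \<le> count_list bs c" using bsE by simp
            then have "count_list (c # rest) c < n" using Mb cin Om.prems(2) by fastforce
            ultimately show ?thesis using cE by (metis rep_less)
          qed
          then show ?thesis using True Om Cons by simp
        next
          case False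
          have "in_E c" using allb cin by blast
          moreover have "MC c < n" using Mb cin Om.prems(2) by fastforce
          ultimately have "islim g \<longrightarrow> on_less c (fs g n)"
            using Om.IH[OF gin] cg by blast
          then have "on_less c (fs g n)" using False Om Cons by simp
          then show ?thesis using False Om Cons by simp
        qed
      qed
    qed
    then have "list_less (p @ c # rest) (p @ fsl g n)" by (simp only: list_less_append_same)
    then show ?thesis using bsE by simp
  qed
  show ?case
  proof
    show "on_le b (fs (Om gs) n)" using C b fsg by (auto simp: on_le_def)
  next
    show "islim (Om gs) \<longrightarrow> on_less b (fs (Om gs) n)" using C b fsg limne by auto
  qed
qed

lemma step:
  assumes "in_E \<beta>" "MC \<beta> < y" "x \<le> y" "on_le \<beta> \<gamma>"
  shows "on_le (fs \<beta> x) (fs \<gamma> y)"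
proof (cases "\<beta> = \<gamma>")
  case True
  then show ?thesis using fs_mono assms(3) by simp
next
  case False
  then have lt: "on_less \<beta> \<gamma>" using assms(4) by (simp add: on_le_def)
  have 1: "on_le \<beta> (fs \<gamma> y)" using bach[OF assms(1,2) lt] by blast
  have 2: "on_le (fs \<beta> x) \<beta>"
  proof (cases "\<beta> = zero")
    case True then show ?thesis by (simp add: on_le_def fs_zero)
  next
    case False then show ?thesis using fs_less by (simp add: on_le_def)
  qed
  show ?thesis using 1 2 on_less_trans unfolding on_le_def by metis
qed

lemma fs_iter_Suc: "fs_iter a (map x [0..<Suc i]) = fs (fs_iter a (map x [0..<i])) (x i)"
  by (simp add: fs_iter_def)

lemma fs_iter_snoc: "fs_iter a (xs @ [v]) = fs (fs_iter a xs) v"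
  by (simp add: fs_iter_def)

theorem lemma2p6:
  fixes \<alpha> :: ON and R :: nat and x y :: "nat \<Rightarrow> nat"
  assumes "in_E \<alpha>"
    and "\<forall>i<R. x i < x (Suc i)"
    and "\<forall>i<R. y i < y (Suc i)"
    and "MC \<alpha> < y 0"
    and "\<forall>i\<le>R. 0 < x i \<and> x i \<le> y i"
    and "on_less zero (fs_iter \<alpha> (map x [0..<Suc R]))"
  shows "on_less zero (fs_iter \<alpha> (map y [0..<Suc R]))"
proof -
  define B where "B i = fs_iter \<alpha> (map x [0..<i])" for i
  define G where "G i = fs_iter \<alpha> (map y [0..<i])" for i
  have inv: "i \<le> R \<longrightarrow> in_E (B i) \<and> MC (B i) < y i \<and> on_le (B i) (G i)" for i
  proof (induction i)
    case 0
    then show ?case using assms(1,4) by (simp add: B_def G_def fs_iter_def on_le_def)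
  next
    case (Suc i)
    show ?case
    proof
      assume si: "Suc i \<le> R"
      then have I: "in_E (B i)" "MC (B i) < y i" "on_le (B i) (G i)" using Suc.IH by auto
      have BS: "B (Suc i) = fs (B i) (x i)" and GS: "G (Suc i) = fs (G i) (y i)"
        by (simp_all add: B_def G_def fs_iter_snoc)
      have xy: "x i \<le> y i" using assms(5) si by simp
      have yy: "y i < y (Suc i)" using assms(3) si by simp
      have "in_E (B (Suc i))" using BS in_E_fs I(1) by simp
      moreover have "MC (B (Suc i)) \<le> y i" using BS MC_fs[OF I(1), of "y i" "x i"] I(2) xy by simp
      moreover have "on_le (B (Suc i)) (G (Suc i))" using BS GS step[OF I(1) I(2) xy I(3)] by simp
      ultimately show "in_E (B (Suc i)) \<and> MC (B (Suc i)) < y (Suc i) \<and> on_le (B (Suc i)) (G (Suc i))"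
        using yy by simp
    qed
  qed
  then have I: "in_E (B R)" "MC (B R) < y R" "on_le (B R) (G R)" by auto
  have xy: "x R \<le> y R" using assms(5) by simp
  have "on_le (B (Suc R)) (G (Suc R))"
    using step[OF I(1) I(2) xy I(3)] by (simp add: B_def G_def fs_iter_snoc)
  moreover have "on_less zero (B (Suc R))" using assms(6) by (simp add: B_def)
  ultimately have "on_less zero (G (Suc R))" using on_less_trans unfolding on_le_def by metis
  then show ?thesis by (simp add: G_def)
qed

end
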